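(* Let $A, B$ be sets with $\mathbf{P}(B) \subseteq \mathcal{P}(B)\setminus\{\varnothing\}$ a set of non-empty predicates on $B$, and let $R \subseteq A \times B$ be a relation. Then $R$ is belief-complete with respect to $\mathbf{P}(B)$ if and only if, for every set $C$, every set $\mathbf{P}(C)\subseteq\mathcal{P}(C)\setminus\{\varnothing\}$ of non-empty predicates on $C$, and every relation $S \subseteq B\times C$ such that (1) $S$ is assumption-complete with respect to $\mathbf{P}(C)$, and (2) $\boxplus_S p = \{ y\in B \mid S(y) = p\} \in \mathbf{P}(B)$ for every $p\in\mathbf{P}(C)$ (where $S(y)=\{z \mid S(y,z)\}$), the relational composite $R;S \subseteq A\times C$, given by $(R;S)(x,z)\iff\exists y.\,[R(x,y)\wedge S(y,z)]$, is assumption-complete with respect to $\mathbf{P}(C)$.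
   Context: A relation $R \subseteq X \times Y$ is assumption-complete with respect to a set $\mathbf{P}(Y)$ of subsets of $Y$ if for every $p \in \mathbf{P}(Y)$ there is $x \in X$ such that for all $y \in Y$: $R(x,y) \iff y \in p$. It is belief-complete with respect to $\mathbf{P}(Y)$ if for every $p \in \mathbf{P}(Y)$ there is $x \in X$ such that for all $y\in Y$, $R(x,y)\Rightarrow y\in p$, and moreover there exists $y$ with $R(x,y)$. *)

theory Defs
  imports Main
begin

definition assumption_complete :: "'a set \<Rightarrow> 'b set \<Rightarrow> ('a \<times> 'b) set \<Rightarrow> 'b set set \<Rightarrow> bool" where
  "assumption_complete X Y R P \<longleftrightarrow>
     (\<forall>p\<in>P. \<exists>x\<in>X. \<forall>y\<in>Y. (x, y) \<in> R \<longleftrightarrow> y \<in> p)"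

definition belief_complete :: "'a set \<Rightarrow> 'b set \<Rightarrow> ('a \<times> 'b) set \<Rightarrow> 'b set set \<Rightarrow> bool" where
  "belief_complete X Y R P \<longleftrightarrow>
     (\<forall>p\<in>P. \<exists>x\<in>X. (\<forall>y\<in>Y. (x, y) \<in> R \<longrightarrow> y \<in> p) \<and> (\<exists>y. (x, y) \<in> R))"

definition box_plus :: "'b set \<Rightarrow> ('b \<times> 'c) set \<Rightarrow> 'c set \<Rightarrow> 'b set" where
  "box_plus B S p = {y \<in> B. {z. (y, z) \<in> S} = p}"

end

theory Submission
  imports Defs
begin

theorem theorem1:
  fixes A :: "'a set" and B :: "'b set" and PB :: "'b set set" and R :: "('a \<times> 'b) set"
  assumes "PB \<subseteq> Pow B - {{}}"
    and "R \<subseteq> A \<times> B"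
    and "\<exists>u v :: 'c. u \<noteq> v"
  shows "belief_complete A B R PB \<longleftrightarrow>
    (\<forall>(C :: 'c set) (PC :: 'c set set) (S :: ('b \<times> 'c) set).
        PC \<subseteq> Pow C - {{}} \<longrightarrow> S \<subseteq> B \<times> C \<longrightarrow>
        assumption_complete B C S PC \<longrightarrow>
        (\<forall>p\<in>PC. box_plus B S p \<in> PB) \<longrightarrow>
        assumption_complete A C (R O S) PC)"
proof
  assume bc: "belief_complete A B R PB"
  show "\<forall>(C :: 'c set) (PC :: 'c set set) (S :: ('b \<times> 'c) set).
        PC \<subseteq> Pow C - {{}} \<longrightarrow> S \<subseteq> B \<times> C \<longrightarrow>
        assumption_complete B C S PC \<longrightarrow>
        (\<forall>p\<in>PC. box_plus B S p \<in> PB) \<longrightarrow>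
        assumption_complete A C (R O S) PC"
  proof (intro allI impI)
    fix C :: "'c set" and PC S
    assume h1: "PC \<subseteq> Pow C - {{}}" and h2: "S \<subseteq> B \<times> C"
      and h3: "assumption_complete B C S PC" and h4: "\<forall>p\<in>PC. box_plus B S p \<in> PB"
    show "assumption_complete A C (R O S) PC"
      unfolding assumption_complete_def
    proof
      fix p assume p: "p \<in> PC"
      then have "box_plus B S p \<in> PB" using h4 by blast
      then obtain x where x: "x \<in> A" "\<forall>y\<in>B. (x, y) \<in> R \<longrightarrow> y \<in> box_plus B S p"
        "\<exists>y. (x, y) \<in> R" using bc unfolding belief_complete_def by blast
      have "\<forall>z\<in>C. (x, z) \<in> R O S \<longleftrightarrow> z \<in> p"
      proof
        fix z assume z: "z \<in> C"
        obtain y0 where y0: "(x,y0) \<in> R" using x by blast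
        then have "y0 \<in> B" using assms(2) by blast
        then have "y0 \<in> box_plus B S p" using x y0 by blast
        then have e0: "{z. (y0, z) \<in> S} = p" unfolding box_plus_def by blast
        show "(x, z) \<in> R O S \<longleftrightarrow> z \<in> p"
        proof
          assume "(x, z) \<in> R O S"
          then obtain y where "(x,y) \<in> R" "(y,z) \<in> S" by blast
          moreover then have "y \<in> B" using assms(2) by blast
          ultimately show "z \<in> p" using x unfolding box_plus_def by blast
        next
          assume "z \<in> p" then show "(x, z) \<in> R O S" using e0 y0 by blast
        qed
      qed
      then show "\<exists>x\<in>A. \<forall>z\<in>C. (x, z) \<in> R O S \<longleftrightarrow> z \<in> p" using x by blast
    qed
  qed
next
  assume H: "\<forall>(C :: 'c set) (PC :: 'c set set) (S :: ('b \<times> 'c) set).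
        PC \<subseteq> Pow C - {{}} \<longrightarrow> S \<subseteq> B \<times> C \<longrightarrow>
        assumption_complete B C S PC \<longrightarrow>
        (\<forall>p\<in>PC. box_plus B S p \<in> PB) \<longrightarrow>
        assumption_complete A C (R O S) PC"
  obtain u v :: 'c where uv: "u \<noteq> v" using assms(3) by blast
  show "belief_complete A B R PB"
    unfolding belief_complete_def
  proof
    fix p assume p: "p \<in> PB"
    then have pB: "p \<subseteq> B" "p \<noteq> {}" using assms(1) by auto
    define S where "S = p \<times> {u} \<union> (B - p) \<times> {v}"
    have a1: "{{u}} \<subseteq> Pow {u,v} - {{}}" by auto
    have a2: "S \<subseteq> B \<times> {u,v}" using pB unfolding S_def by auto
    have a3: "assumption_complete B {u,v} S {{u}}"
      unfolding assumption_complete_def S_def using pB uv by auto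
    have bp: "box_plus B S {u} = p"
      unfolding box_plus_def S_def using pB uv by auto
    have "assumption_complete A {u,v} (R O S) {{u}}"
      using H a1 a2 a3 bp p by auto
    then obtain x where x: "x \<in> A" "\<forall>z\<in>{u,v}. (x, z) \<in> R O S \<longleftrightarrow> z \<in> {u}"
      unfolding assumption_complete_def by auto
    have "(x,u) \<in> R O S" "(x,v) \<notin> R O S" using x uv by auto
    then have "(\<forall>y\<in>B. (x, y) \<in> R \<longrightarrow> y \<in> p) \<and> (\<exists>y. (x, y) \<in> R)"
      unfolding S_def using uv by auto
    then show "\<exists>x\<in>A. (\<forall>y\<in>B. (x, y) \<in> R \<longrightarrow> y \<in> p) \<and> (\<exists>y. (x, y) \<in> R)"
      using x by blast
  qed
qed

end
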